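(* Let $\rho_n$ be the number of distinct Manacher arrays of strings of length $n$ (over arbitrary alphabets). Then $\rho_n=\Omega(3^n)$.
   Context: The Manacher array of a string $S$ of length $n$ is the array $\mathsf A[1..2n-1]$ where, for $i=2k-1$, $\mathsf A[i]$ is the largest $r\ge 0$ with $1\le k-r$, $k+r\le n$ and $S[k-r..k+r]$ a palindrome, and for $i=2k$, $\mathsf A[i]$ is the largest $r\ge0$ with $1\le k-r+1$, $k+r\le n$ and $S[k-r+1..k+r]$ a palindrome. *)

theory Defs
  imports Main "HOL-Library.Landau_Symbols"
begin

(* Strings are lists; positions are 1-indexed as in the paper: S[j] = S ! (j - 1).
   is_pal S a b : the factor S[a..b] (empty if b < a) is a palindrome. *)
definition is_pal :: "'a list \<Rightarrow> nat \<Rightarrow> nat \<Rightarrow> bool" where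
  "is_pal S a b \<longleftrightarrow> (\<forall>j. a \<le> j \<and> j \<le> b \<longrightarrow> S ! (j - 1) = S ! (a + b - j - 1))"

definition manacher_entry :: "'a list \<Rightarrow> nat \<Rightarrow> nat" where
  "manacher_entry S i =
     (let n = length S in
      if odd i then
        (let k = (i + 1) div 2 in
         Max {r. 1 + r \<le> k \<and> k + r \<le> n \<and> is_pal S (k - r) (k + r)})
      else
        (let k = i div 2 in
         Max {r. r \<le> k \<and> k + r \<le> n \<and> is_pal S (k + 1 - r) (k + r)}))"

(* The Manacher array A[1..2n-1], stored as a list (list index i-1 holds A[i]) *)
definition manacher :: "'a list \<Rightarrow> nat list" where
  "manacher S = map (manacher_entry S) [1..<2 * length S]"

(* Alphabet: nat
   (a countably infinite alphabet realises every equality pattern, hence every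
   Manacher array of any string over any alphabet). *)
definition rho :: "nat \<Rightarrow> nat" where
  "rho n = card {manacher (S :: nat list) | S. length S = n}"

end

theory Submission
  imports Defs
begin

lemma pal_sub:
  assumes "is_pal S a' b'" "a' \<le> a" "a + b = a' + b'"
  shows "is_pal S a b"
  unfolding is_pal_def
proof (intro allI impI)
  fix j assume "a \<le> j \<and> j \<le> b"
  then have "a' \<le> j \<and> j \<le> b'" using assms(2,3) by linarith
  then have "S ! (j - 1) = S ! (a' + b' - j - 1)" using assms(1) unfolding is_pal_def by blast
  then show "S ! (j - 1) = S ! (a + b - j - 1)" using assms(3) by simp
qed

lemma pal_single: "is_pal S k k"
  unfolding is_pal_def by auto

lemma pal_empty: "is_pal S (Suc k) k"
  unfolding is_pal_def by auto

lemma entry_odd: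
  assumes "1 \<le> a" "a \<le> b" "b \<le> length S" "even (a + b)"
  shows "is_pal S a b \<longleftrightarrow> (b - a) div 2 \<le> manacher_entry S (a + b - 1)"
proof -
  obtain t where t: "a + b = 2 * t" using assms(4) by blast
  have od: "odd (a + b - 1)" using t assms(1) by (cases t) auto
  have kk: "(a + b - 1 + 1) div 2 = t" using t assms(1) by simp
  define M where "M = {r. 1 + r \<le> t \<and> t + r \<le> length S \<and> is_pal S (t - r) (t + r)}"
  have me: "manacher_entry S (a + b - 1) = Max M"
    unfolding manacher_entry_def M_def using od kk by (simp add: Let_def)
  have fin: "finite M" by (rule finite_subset[of _ "{..length S}"]) (auto simp: M_def)
  have ba: "b - a = 2 * (t - a)" using t assms(2) by linarith
  have ta: "t - (b - a) div 2 = a" "t + (b - a) div 2 = b" using t assms ba by simp_all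
  have r0: "(b - a) div 2 \<in> M \<longleftrightarrow> is_pal S a b" unfolding M_def using assms t ta by auto
  have z: "0 \<in> M" unfolding M_def using assms t by (auto simp: pal_single)
  show ?thesis
  proof
    assume "is_pal S a b"
    then have "(b - a) div 2 \<in> M" using r0 by simp
    then show "(b - a) div 2 \<le> manacher_entry S (a + b - 1)" using me fin Max_ge by simp
  next
    assume le: "(b - a) div 2 \<le> manacher_entry S (a + b - 1)"
    have "Max M \<in> M" using fin z Max_in by blast
    then have mm: "1 + Max M \<le> t" "is_pal S (t - Max M) (t + Max M)" unfolding M_def by auto
    from ta(1) have "t - Max M \<le> a" using le me by linarith
    moreover have "a + b = (t - Max M) + (t + Max M)" using t mm by simp
    ultimately show "is_pal S a b" using pal_sub mm(2) by blast
  qed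
qed

lemma entry_even:
  assumes "1 \<le> a" "a \<le> b" "b \<le> length S" "odd (a + b)"
  shows "is_pal S a b \<longleftrightarrow> (b - a + 1) div 2 \<le> manacher_entry S (a + b - 1)"
proof -
  obtain t where t: "a + b = 2 * t + 1" using assms(4) oddE by blast
  have ev: "even (a + b - 1)" using t by simp
  have kk: "(a + b - 1) div 2 = t" using t by simp
  define M where "M = {r. r \<le> t \<and> t + r \<le> length S \<and> is_pal S (t + 1 - r) (t + r)}"
  have me: "manacher_entry S (a + b - 1) = Max M"
    unfolding manacher_entry_def M_def using ev kk by (simp add: Let_def)
  have fin: "finite M" by (rule finite_subset[of _ "{..length S}"]) (auto simp: M_def)
  have ba: "b - a + 1 = 2 * (t + 1 - a)" using t assms(2) by linarith
  have ta: "t + 1 - (b - a + 1) div 2 = a" "t + (b - a + 1) div 2 = b" "(b - a + 1) div 2 \<le> t"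
    using t assms ba by simp_all
  have r0: "(b - a + 1) div 2 \<in> M \<longleftrightarrow> is_pal S a b" unfolding M_def using assms t ta by auto
  have z: "0 \<in> M" unfolding M_def using assms t by (auto simp: pal_empty)
  show ?thesis
  proof
    assume "is_pal S a b"
    then have "(b - a + 1) div 2 \<in> M" using r0 by simp
    then show "(b - a + 1) div 2 \<le> manacher_entry S (a + b - 1)" using me fin Max_ge by simp
  next
    assume le: "(b - a + 1) div 2 \<le> manacher_entry S (a + b - 1)"
    have "Max M \<in> M" using fin z Max_in by blast
    then have mm: "Max M \<le> t" "is_pal S (t + 1 - Max M) (t + Max M)" unfolding M_def by auto
    from ta(1) have "t + 1 - Max M \<le> a" using le me by linarith
    moreover have "a + b = (t + 1 - Max M) + (t + Max M)" using t mm by simp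
    ultimately show "is_pal S a b" using pal_sub mm(2) by blast
  qed
qed

lemma pal_iff_entry:
  assumes "1 \<le> a" "a \<le> b" "b \<le> length S"
  shows "is_pal S a b \<longleftrightarrow> (b - a + 1) div 2 \<le> manacher_entry S (a + b - 1)"
proof (cases "even (a + b)")
  case True
  then have "(b - a + 1) div 2 = (b - a) div 2" using assms(2)
    by (metis add_diff_inverse_nat even_add even_succ_div_two not_le)
  then show ?thesis using entry_odd[OF assms True] by simp
next
  case False
  then show ?thesis using entry_even[OF assms] by simp
qed

lemma manacher_nth:
  assumes "1 \<le> i" "i < 2 * length S"
  shows "manacher S ! (i - 1) = manacher_entry S i"
  using assms unfolding manacher_def by simp

lemma manacher_eq_pal:
  assumes "manacher S = manacher T" "length S = length T" "1 \<le> a" "a \<le> b" "b \<le> length S"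
  shows "is_pal S a b = is_pal T a b"
proof -
  have "manacher_entry S (a + b - 1) = manacher_entry T (a + b - 1)"
    using manacher_nth[of "a + b - 1" S] manacher_nth[of "a + b - 1" T] assms by simp
  then show ?thesis using pal_iff_entry[of a b S] pal_iff_entry[of a b T] assms by simp
qed

lemma pal_prefix:
  assumes "1 \<le> a" "b \<le> length L"
  shows "is_pal (L @ R) a b = is_pal L a b"
  unfolding is_pal_def
proof (intro iffI allI impI)
  fix j assume h: "\<forall>j. a \<le> j \<and> j \<le> b \<longrightarrow> (L @ R) ! (j - 1) = (L @ R) ! (a + b - j - 1)"
    and j: "a \<le> j \<and> j \<le> b"
  have "j - 1 < length L" "a + b - j - 1 < length L" using assms j by linarith+
  moreover have "(L @ R) ! (j - 1) = (L @ R) ! (a + b - j - 1)" using h j by blast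
  ultimately show "L ! (j - 1) = L ! (a + b - j - 1)" by (simp add: nth_append)
next
  fix j assume h: "\<forall>j. a \<le> j \<and> j \<le> b \<longrightarrow> L ! (j - 1) = L ! (a + b - j - 1)"
    and j: "a \<le> j \<and> j \<le> b"
  have "j - 1 < length L" "a + b - j - 1 < length L" using assms j by linarith+
  then show "(L @ R) ! (j - 1) = (L @ R) ! (a + b - j - 1)" using h j by (simp add: nth_append)
qed

lemma pal_two:
  assumes "1 \<le> a"
  shows "is_pal S a (Suc a) \<longleftrightarrow> S ! (a - 1) = S ! a"
proof
  assume "is_pal S a (Suc a)"
  then show "S ! (a - 1) = S ! a" unfolding is_pal_def by (metis le_refl le_SucI add_Suc_right diff_Suc_1 add_diff_cancel_left')
next
  assume h: "S ! (a - 1) = S ! a"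
  show "is_pal S a (Suc a)" unfolding is_pal_def
  proof (intro allI impI)
    fix j assume "a \<le> j \<and> j \<le> Suc a"
    then have "j = a \<or> j = Suc a" by auto
    then show "S ! (j - 1) = S ! (a + Suc a - j - 1)" using h assms by auto
  qed
qed

lemma pal_run:
  assumes "a < b" "\<forall>t. a < t \<and> t < b \<longrightarrow> S ! t = v"
  shows "is_pal S (Suc a) (Suc b) \<longleftrightarrow> S ! a = S ! b"
proof
  assume "is_pal S (Suc a) (Suc b)"
  then show "S ! a = S ! b" unfolding is_pal_def using assms(1)
    by (metis (no_types, lifting) Suc_leI diff_Suc_1 le_refl add_Suc add_Suc_right
        add_diff_cancel_left' less_imp_le Suc_le_mono)
next
  assume h: "S ! a = S ! b"
  show "is_pal S (Suc a) (Suc b)" unfolding is_pal_def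
  proof (intro allI impI)
    fix j assume j: "Suc a \<le> j \<and> j \<le> Suc b"
    show "S ! (j - 1) = S ! (Suc a + Suc b - j - 1)"
    proof (cases "j = Suc a \<or> j = Suc b")
      case True
      then show ?thesis using h by auto
    next
      case False
      then have "a < j - 1" "j - 1 < b" "a < Suc a + Suc b - j - 1" "Suc a + Suc b - j - 1 < b"
        using j by auto
      then show ?thesis using assms(2) by metis
    qed
  qed
qed

definition lastrun :: "nat list \<Rightarrow> nat" where
  "lastrun P = (GREATEST q. q < length P \<and> P ! q \<noteq> last P)"

lemma lastrun_props:
  assumes "2 \<le> length P" "P ! 0 \<noteq> P ! 1"
  shows "lastrun P < length P" "P ! lastrun P \<noteq> last P"
    "\<forall>t. lastrun P < t \<and> t < length P \<longrightarrow> P ! t = last P"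
proof -
  let ?Q = "\<lambda>q. q < length P \<and> P ! q \<noteq> last P"
  obtain k where k: "?Q k"
  proof (cases "P ! 0 = last P")
    case True
    then show ?thesis using that[of 1] assms by auto
  next
    case False
    have "0 < length P" using assms by linarith
    then show ?thesis using that[of 0] False by blast
  qed
  have bd: "\<And>y. ?Q y \<Longrightarrow> y \<le> length P" by simp
  have g: "?Q (lastrun P)" unfolding lastrun_def using GreatestI_nat[of ?Q k, OF k bd] .
  then show "lastrun P < length P" "P ! lastrun P \<noteq> last P" by auto
  show "\<forall>t. lastrun P < t \<and> t < length P \<longrightarrow> P ! t = last P"
  proof (intro allI impI)
    fix t assume t: "lastrun P < t \<and> t < length P"
    show "P ! t = last P"
    proof (rule ccontr)
      assume "P ! t \<noteq> last P"
      then have "t \<le> lastrun P" unfolding lastrun_def using Greatest_le_nat[of ?Q t, OF _ bd] t by blast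
      then show False using t by simp
    qed
  qed
qed

definition nxt :: "nat list \<Rightarrow> nat \<Rightarrow> nat" where
  "nxt P c = (if c = 0 then length P else if c = 1 then last P else P ! lastrun P)"

fun build :: "nat list \<Rightarrow> nat list" where
  "build [] = [0, 1]"
| "build (c # cs) = build cs @ [nxt (build cs) c]"

definition goodP :: "nat list \<Rightarrow> bool" where
  "goodP P \<longleftrightarrow> 2 \<le> length P \<and> P ! 0 = 0 \<and> P ! 1 = 1 \<and> (\<forall>p < length P. P ! p \<le> p)"

lemma nxt_le:
  assumes "goodP P"
  shows "nxt P c \<le> length P"
proof -
  have ne: "P \<noteq> []" using assms unfolding goodP_def by auto
  have "P ! (length P - 1) \<le> length P - 1" using assms ne unfolding goodP_def by simp
  then have "last P \<le> length P" using ne by (simp add: last_conv_nth)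
  moreover have "P ! lastrun P \<le> length P"
    using assms lastrun_props(1)[of P] unfolding goodP_def by fastforce
  ultimately show ?thesis unfolding nxt_def by auto
qed

lemma build_props: "goodP (build cs) \<and> length (build cs) = length cs + 2"
proof (induction cs)
  case Nil
  then show ?case unfolding goodP_def by (auto simp: less_Suc_eq)
next
  case (Cons c cs)
  let ?P = "build cs"
  have g: "goodP ?P" and l: "length ?P = length cs + 2" using Cons by auto
  have le: "nxt ?P c \<le> length ?P" using nxt_le[OF g] .
  have "goodP (?P @ [nxt ?P c])" unfolding goodP_def
  proof (intro conjI allI impI)
    show "2 \<le> length (?P @ [nxt ?P c])" using l by simp
    show "(?P @ [nxt ?P c]) ! 0 = 0" using g l unfolding goodP_def by (simp add: nth_append)
    show "(?P @ [nxt ?P c]) ! 1 = 1" using g l unfolding goodP_def by (simp add: nth_append)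
    fix p assume p: "p < length (?P @ [nxt ?P c])"
    show "(?P @ [nxt ?P c]) ! p \<le> p"
    proof (cases "p < length ?P")
      case True
      then show ?thesis using g unfolding goodP_def by (simp add: nth_append)
    next
      case False
      then have "p = length ?P" using p by simp
      then show ?thesis using le by (simp add: nth_append)
    qed
  qed
  then show ?case using l by simp
qed

lemma step_distinct:
  assumes g: "goodP P" and c: "c \<in> {0, 1, 2}" and d: "d \<in> {0, 1, 2}"
    and H: "\<forall>a b. 1 \<le> a \<longrightarrow> a \<le> b \<longrightarrow> b \<le> Suc (length P) \<longrightarrow>
      is_pal (P @ [nxt P c]) a b = is_pal (P @ [nxt P d]) a b"
  shows "c = d"
proof -
  define m where "m = length P"
  define v where "v = last P"
  define q where "q = lastrun P"
  define w where "w = P ! q"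
  have m2: "2 \<le> m" and p01: "P ! 0 \<noteq> P ! 1" and bnd: "\<forall>p < m. P ! p \<le> p"
    using g unfolding goodP_def m_def by auto
  have ne: "P \<noteq> []" using m2 m_def by auto
  have vP: "v = P ! (m - 1)" unfolding v_def m_def using ne by (simp add: last_conv_nth)
  have mlt: "m - 1 < m" using m2 by linarith
  then have "P ! (m - 1) \<le> m - 1" using bnd by blast
  then have vm: "v < m" using vP m2 by linarith
  have m2': "2 \<le> length P" using m2 m_def by simp
  have ql: "q < m" and wv: "w \<noteq> v" and run: "\<forall>t. q < t \<and> t < m \<longrightarrow> P ! t = v"
    using lastrun_props[OF m2' p01] unfolding m_def q_def w_def v_def by blast+
  have wm: "w < m" using bnd ql w_def by (meson le_less_trans)
  have T1: "is_pal (P @ [x]) m (Suc m) \<longleftrightarrow> v = x" for x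
  proof -
    have "is_pal (P @ [x]) m (Suc m) \<longleftrightarrow> (P @ [x]) ! (m - 1) = (P @ [x]) ! m"
      using pal_two[of m] m2 by simp
    also have "\<dots> \<longleftrightarrow> v = x" using vP mlt m_def by (simp add: nth_append)
    finally show ?thesis .
  qed
  have T2: "is_pal (P @ [x]) (Suc q) (Suc m) \<longleftrightarrow> w = x" for x
  proof -
    have R: "\<forall>t. q < t \<and> t < m \<longrightarrow> (P @ [x]) ! t = v" using run m_def by (simp add: nth_append)
    have "is_pal (P @ [x]) (Suc q) (Suc m) \<longleftrightarrow> (P @ [x]) ! q = (P @ [x]) ! m"
      by (rule pal_run[OF ql R])
    also have "\<dots> \<longleftrightarrow> w = x" using ql w_def m_def by (simp add: nth_append)
    finally show ?thesis .
  qed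
  have i1: "1 \<le> m" "m \<le> Suc m" "Suc m \<le> Suc (length P)" using m2 m_def by simp_all
  have "is_pal (P @ [nxt P c]) m (Suc m) = is_pal (P @ [nxt P d]) m (Suc m)" using H i1 by blast
  then have e1: "(v = nxt P c) = (v = nxt P d)" using T1 by simp
  have i2: "1 \<le> Suc q" "Suc q \<le> Suc m" "Suc m \<le> Suc (length P)" using ql m_def by simp_all
  have "is_pal (P @ [nxt P c]) (Suc q) (Suc m) = is_pal (P @ [nxt P d]) (Suc q) (Suc m)" using H i2 by blast
  then have e2: "(w = nxt P c) = (w = nxt P d)" using T2 by simp
  have n0: "nxt P 0 = m" "nxt P 1 = v" "nxt P 2 = w" unfolding nxt_def m_def v_def w_def q_def by auto
  have "m \<noteq> v" "m \<noteq> w" using vm wm by simp_all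
  then show ?thesis using c d e1 e2 n0 wv by auto
qed

lemma build_inj:
  "length cs = length ds \<Longrightarrow> set cs \<subseteq> {0, 1, 2} \<Longrightarrow> set ds \<subseteq> {0, 1, 2} \<Longrightarrow>
   (\<forall>a b. 1 \<le> a \<longrightarrow> a \<le> b \<longrightarrow> b \<le> length (build cs) \<longrightarrow> is_pal (build cs) a b = is_pal (build ds) a b)
   \<Longrightarrow> cs = ds"
proof (induction cs arbitrary: ds)
  case Nil
  then show ?case by simp
next
  case (Cons c cs)
  then obtain d ds' where ds: "ds = d # ds'" by (cases ds) auto
  let ?P = "build cs" and ?Q = "build ds'"
  have lP: "length ?P = length ?Q" using build_props[of cs] build_props[of ds'] Cons.prems(1) ds by simp
  have H: "\<forall>a b. 1 \<le> a \<longrightarrow> a \<le> b \<longrightarrow> b \<le> Suc (length ?P) \<longrightarrow>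
      is_pal (?P @ [nxt ?P c]) a b = is_pal (?Q @ [nxt ?Q d]) a b"
    using Cons.prems(4) ds by simp
  have HP: "\<forall>a b. 1 \<le> a \<longrightarrow> a \<le> b \<longrightarrow> b \<le> length ?P \<longrightarrow> is_pal ?P a b = is_pal ?Q a b"
  proof (intro allI impI)
    fix a b assume a: "1 \<le> a" "a \<le> b" "b \<le> length ?P"
    have "is_pal (?P @ [nxt ?P c]) a b = is_pal (?Q @ [nxt ?Q d]) a b" using H a by simp
    then show "is_pal ?P a b = is_pal ?Q a b" using pal_prefix[of a b ?P] pal_prefix[of a b ?Q] a lP by simp
  qed
  have eq: "cs = ds'" using Cons.IH[OF _ _ _ HP] Cons.prems(1-3) ds by auto
  have g: "goodP ?P" using build_props by blast
  have cc: "c \<in> {0, 1, 2}" using Cons.prems(2) by simp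
  have dd: "d \<in> {0, 1, 2}" using Cons.prems(3) ds by simp
  from H have H': "\<forall>a b. 1 \<le> a \<longrightarrow> a \<le> b \<longrightarrow> b \<le> Suc (length ?P) \<longrightarrow>
      is_pal (?P @ [nxt ?P c]) a b = is_pal (?P @ [nxt ?P d]) a b" unfolding eq[symmetric] .
  have "c = d" by (rule step_distinct[OF g cc dd H'])
  then show ?case using eq ds by simp
qed

lemma entry_le:
  assumes "1 \<le> i" "i < 2 * length S"
  shows "manacher_entry S i \<le> length S"
proof (cases "odd i")
  case True
  define k where "k = (i + 1) div 2"
  define M where "M = {r. 1 + r \<le> k \<and> k + r \<le> length S \<and> is_pal S (k - r) (k + r)}"
  have me: "manacher_entry S i = Max M" unfolding manacher_entry_def M_def k_def using True by (simp add: Let_def)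
  have fin: "finite M" by (rule finite_subset[of _ "{..length S}"]) (auto simp: M_def)
  have "1 \<le> k" "k \<le> length S" using assms True unfolding k_def by (auto elim!: oddE)
  then have "0 \<in> M" unfolding M_def by (simp add: pal_single)
  moreover have "\<forall>r\<in>M. r \<le> length S" unfolding M_def by auto
  ultimately show ?thesis using me fin by (metis Max.boundedI empty_iff)
next
  case False
  define k where "k = i div 2"
  define M where "M = {r. r \<le> k \<and> k + r \<le> length S \<and> is_pal S (k + 1 - r) (k + r)}"
  have me: "manacher_entry S i = Max M" unfolding manacher_entry_def M_def k_def using False by (simp add: Let_def)
  have fin: "finite M" by (rule finite_subset[of _ "{..length S}"]) (auto simp: M_def)
  have "k \<le> length S" using assms unfolding k_def by linarith
  then have "0 \<in> M" unfolding M_def using pal_empty[of S k] by simp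
  moreover have "\<forall>r\<in>M. r \<le> length S" unfolding M_def by auto
  ultimately show ?thesis using me fin by (metis Max.boundedI empty_iff)
qed

lemma finite_arrays: "finite {manacher (S :: nat list) | S. length S = N}"
proof (rule finite_subset)
  show "{manacher (S :: nat list) | S. length S = N} \<subseteq> {xs. set xs \<subseteq> {..N} \<and> length xs = 2 * N - 1}"
  proof
    fix xs assume "xs \<in> {manacher (S :: nat list) | S. length S = N}"
    then obtain S :: "nat list" where S: "length S = N" "xs = manacher S" by blast
    have "set xs \<subseteq> {..N}"
    proof
      fix y assume "y \<in> set xs"
      then obtain i where "i \<in> set [1..<2 * length S]" "y = manacher_entry S i"
        using S unfolding manacher_def by auto
      then show "y \<in> {..N}" using entry_le[of i S] S by auto
    qed
    moreover have "length xs = 2 * N - 1" using S unfolding manacher_def by simp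
    ultimately show "xs \<in> {xs. set xs \<subseteq> {..N} \<and> length xs = 2 * N - 1}" by blast
  qed
  show "finite {xs. set xs \<subseteq> {..N} \<and> length xs = 2 * N - 1}"
    by (rule finite_lists_length_eq) simp
qed

lemma rho_lower: "3 ^ n \<le> rho (n + 2)"
proof -
  define C where "C = {cs. set cs \<subseteq> {0, 1, 2 :: nat} \<and> length cs = n}"
  define X where "X = {manacher (S :: nat list) | S. length S = n + 2}"
  define f where "f = (\<lambda>cs. manacher (build cs))"
  have cC: "card C = 3 ^ n" unfolding C_def by (simp add: card_lists_length_eq numeral_3_eq_3)
  have sub: "f ` C \<subseteq> X" unfolding f_def C_def X_def using build_props by auto
  have inj: "inj_on f C"
  proof (rule inj_onI)
    fix cs ds assume cs: "cs \<in> C" and ds: "ds \<in> C" and e: "f cs = f ds"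
    have l: "length (build cs) = length (build ds)" using build_props[of cs] build_props[of ds] cs ds
      unfolding C_def by simp
    have "\<forall>a b. 1 \<le> a \<longrightarrow> a \<le> b \<longrightarrow> b \<le> length (build cs) \<longrightarrow> is_pal (build cs) a b = is_pal (build ds) a b"
      using manacher_eq_pal[of "build cs" "build ds"] e l unfolding f_def by blast
    moreover have "length cs = length ds" "set cs \<subseteq> {0, 1, 2}" "set ds \<subseteq> {0, 1, 2}"
      using cs ds unfolding C_def by auto
    ultimately show "cs = ds" using build_inj[of cs ds] by blast
  qed
  have "card (f ` C) = 3 ^ n" using card_image[OF inj] cC by simp
  moreover have "card (f ` C) \<le> card X" using card_mono[OF _ sub] finite_arrays unfolding X_def by blast
  ultimately show ?thesis unfolding rho_def X_def by simp
qed

theorem mainTheorem2: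
  shows "(\<lambda>n. real (rho n)) \<in> \<Omega>(\<lambda>n. 3 ^ n)"
proof (rule landau_omega.bigI[of "1 / 9"])
  show "(0::real) < 1 / 9" by simp
  show "\<forall>\<^sub>F x in at_top. norm (real (rho x)) \<ge> 1 / 9 * norm ((3::real) ^ x)"
    unfolding eventually_at_top_linorder
  proof (intro exI allI impI)
    fix x :: nat assume x: "2 \<le> x"
    then obtain n where n: "x = n + 2" by (metis add.commute le_Suc_ex)
    have "(3::real) ^ n \<le> real (rho x)" using rho_lower[of n] n by (metis of_nat_le_iff of_nat_numeral of_nat_power)
    moreover have "(3::real) ^ x = 9 * 3 ^ n" using n by (simp add: power_add)
    ultimately show "norm (real (rho x)) \<ge> 1 / 9 * norm ((3::real) ^ x)" by simp
  qed
qed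

end
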